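(* Fix $\theta$ with $\phi(\theta)<\beta$ and fix $Q\in\{0,1\}$. Then $$\lim_{\tau\to\tau^\star(\theta)^+}u(s_1(\theta,\tau))=\lim_{\tau\to\tau^\star(\theta)^-}u(s_2(\theta,\tau)).$$
   Context: Setup. Let $Q\in\{0,1\}$ be a random variable with $\mathbb P(Q=1)=\pi\in(0,1)$, and let $(\Theta,\Gamma)$ be a real-valued random vector whose conditional joint density given $Q=1$ is $h_q$ and given $Q=0$ is $h_u$, both strictly positive on $\mathbb R^2$. Monotone likelihood ratio assumption: $l(\theta,\gamma)=h_q(\theta,\gamma)/h_u(\theta,\gamma)$ is continuous and strictly increasing in each of $\theta$ and $\gamma$, and for each $\theta$ the map $\gamma\mapsto l(\theta,\gamma)$ has infimum $0$ and supremum $+\infty$. Fix payoffs $x_q>0$, $x_u>0$. For $\tau\in(-x_u,x_q)$ let $A(\tau)=\mathbb 1\{l(\Theta,\Gamma)>\frac{(1-\pi)(x_u+\tau)}{\pi(x_q-\tau)}\}$, $s_1(\theta,\tau)=\mathbb E[Q\mid\Theta=\theta,A(\tau)=1]$, $s_2(\theta,\tau)=\mathbb E[A(\tau)\mid\Theta=\theta]$, $\phi(\theta)=\mathbb P(Q=1\mid\Theta=\theta)$. The equalizing prejudice $\tau^\star(\theta)$ is the unique $\tau\in(-x_u,x_q)$ with $s_1(\theta,\tau)=s_2(\theta,\tau)$. Regret. Fix a cutoff $c\in(-x_u,x_q)$ and let $\beta=(x_u+c)/(x_q+x_u)\in(0,1)$. For a score value $s\in[0,1]$ and a qualification value $Q\in\{0,1\}$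 define $\mathcal N(s)=sx_q-(1-s)x_u$, $A'(s)=\mathbb 1\{\mathcal N(s)>c\}$ (i.e. $s>\beta$), $\mathcal P(s)=A'(s)(Qx_q-(1-Q)x_u)$, and the individual regret $u(s)=\mathcal N(s)-\mathcal P(s)$. For a fixed applicant $(\theta,Q)$, $u(s_k(\theta,\tau))$ is viewed as a function of $\tau\in(-x_u,x_q)$. *)

theory Defs
  imports "HOL-Analysis.Analysis"
begin

definition lr :: "(real \<Rightarrow> real \<Rightarrow> real) \<Rightarrow> (real \<Rightarrow> real \<Rightarrow> real) \<Rightarrow> real \<Rightarrow> real \<Rightarrow> real" where
  "lr hq hu \<theta> \<gamma> = hq \<theta> \<gamma> / hu \<theta> \<gamma>"

definition thr :: "real \<Rightarrow> real \<Rightarrow> real \<Rightarrow> real \<Rightarrow> real" where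
  "thr \<pi> xq xu \<tau> = (1 - \<pi>) * (xu + \<tau>) / (\<pi> * (xq - \<tau>))"

definition accmass :: "(real \<Rightarrow> real \<Rightarrow> real) \<Rightarrow> (real \<Rightarrow> real \<Rightarrow> real) \<Rightarrow> (real \<Rightarrow> real \<Rightarrow> real)
     \<Rightarrow> real \<Rightarrow> real \<Rightarrow> real \<Rightarrow> real \<Rightarrow> real \<Rightarrow> real" where
  "accmass h hq hu \<pi> xq xu \<theta> \<tau> =
     (LINT \<gamma>|lborel. indicator {\<gamma>. lr hq hu \<theta> \<gamma> > thr \<pi> xq xu \<tau>} \<gamma> * h \<theta> \<gamma>)"

text \<open>s_1(theta,tau) = E[Q | Theta = theta, A(tau) = 1].\<close>
definition s1 :: "(real \<Rightarrow> real \<Rightarrow> real) \<Rightarrow> (real \<Rightarrow> real \<Rightarrow> real) \<Rightarrow> real \<Rightarrow> real \<Rightarrow> real \<Rightarrow> real \<Rightarrow> real \<Rightarrow> real" where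
  "s1 hq hu \<pi> xq xu \<theta> \<tau> =
     (\<pi> * accmass hq hq hu \<pi> xq xu \<theta> \<tau>) /
     (\<pi> * accmass hq hq hu \<pi> xq xu \<theta> \<tau> + (1 - \<pi>) * accmass hu hq hu \<pi> xq xu \<theta> \<tau>)"

text \<open>s_2(theta,tau) = E[A(tau) | Theta = theta].\<close>
definition s2 :: "(real \<Rightarrow> real \<Rightarrow> real) \<Rightarrow> (real \<Rightarrow> real \<Rightarrow> real) \<Rightarrow> real \<Rightarrow> real \<Rightarrow> real \<Rightarrow> real \<Rightarrow> real \<Rightarrow> real" where
  "s2 hq hu \<pi> xq xu \<theta> \<tau> =
     (\<pi> * accmass hq hq hu \<pi> xq xu \<theta> \<tau> + (1 - \<pi>) * accmass hu hq hu \<pi> xq xu \<theta> \<tau>) /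
     (\<pi> * (LINT \<gamma>|lborel. hq \<theta> \<gamma>) + (1 - \<pi>) * (LINT \<gamma>|lborel. hu \<theta> \<gamma>))"

text \<open>phi(theta) = P(Q = 1 | Theta = theta).\<close>
definition phi :: "(real \<Rightarrow> real \<Rightarrow> real) \<Rightarrow> (real \<Rightarrow> real \<Rightarrow> real) \<Rightarrow> real \<Rightarrow> real \<Rightarrow> real" where
  "phi hq hu \<pi> \<theta> =
     (\<pi> * (LINT \<gamma>|lborel. hq \<theta> \<gamma>)) /
     (\<pi> * (LINT \<gamma>|lborel. hq \<theta> \<gamma>) + (1 - \<pi>) * (LINT \<gamma>|lborel. hu \<theta> \<gamma>))"

definition tau_star :: "(real \<Rightarrow> real \<Rightarrow> real) \<Rightarrow> (real \<Rightarrow> real \<Rightarrow> real) \<Rightarrow> real \<Rightarrow> real \<Rightarrow> real \<Rightarrow> real \<Rightarrow> real" where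
  "tau_star hq hu \<pi> xq xu \<theta> =
     (THE \<tau>. - xu < \<tau> \<and> \<tau> < xq \<and> s1 hq hu \<pi> xq xu \<theta> \<tau> = s2 hq hu \<pi> xq xu \<theta> \<tau>)"

definition netv :: "real \<Rightarrow> real \<Rightarrow> real \<Rightarrow> real" where
  "netv xq xu s = s * xq - (1 - s) * xu"

definition accept' :: "real \<Rightarrow> real \<Rightarrow> real \<Rightarrow> real \<Rightarrow> real" where
  "accept' xq xu c s = (if netv xq xu s > c then 1 else 0)"

definition payoff :: "real \<Rightarrow> real \<Rightarrow> real \<Rightarrow> real \<Rightarrow> real \<Rightarrow> real" where
  "payoff xq xu c Q s = accept' xq xu c s * (Q * xq - (1 - Q) * xu)"

definition regret :: "real \<Rightarrow> real \<Rightarrow> real \<Rightarrow> real \<Rightarrow> real \<Rightarrow> real" where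
  "regret xq xu c Q s = netv xq xu s - payoff xq xu c Q s"

end

theory Submission imports Defs begin

definition Ar :: "(real \<Rightarrow> real) \<Rightarrow> real \<Rightarrow> real" where
  "Ar f z = (LINT x|lborel. indicator {z<..} x * f x)"

lemma int_ind:
  fixes f :: "real \<Rightarrow> real"
  assumes "integrable lborel f" "S \<in> sets borel"
  shows "integrable lborel (\<lambda>x. indicator S x * f x)"
  using integrable_real_mult_indicator[of S lborel f] assms by (simp add: mult.commute)

lemma Ar_seq:
  fixes f :: "real \<Rightarrow> real"
  assumes f: "integrable lborel f" and S: "S \<longlonglongrightarrow> z"
  shows "(\<lambda>n. Ar f (S n)) \<longlonglongrightarrow> Ar f z"
  unfolding Ar_def
proof (rule integral_dominated_convergence[where w="\<lambda>x. \<bar>f x\<bar>"])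
  show "(\<lambda>x. indicator {z<..} x * f x) \<in> borel_measurable lborel"
    using int_ind[OF f, of "{z<..}"] by auto
  show "(\<lambda>x. indicator {S i<..} x * f x) \<in> borel_measurable lborel" for i
    using int_ind[OF f, of "{S i<..}"] by auto
  show "integrable lborel (\<lambda>x. \<bar>f x\<bar>)" using f by auto
  show "AE x in lborel. norm (indicator {S i<..} x * f x) \<le> \<bar>f x\<bar>" for i
    by (auto simp: indicator_def)
  show "AE x in lborel. (\<lambda>i. indicator {S i<..} x * f x) \<longlonglongrightarrow> indicator {z<..} x * f x"
    using AE_lborel_singleton[of z]
  proof eventually_elim
    case (elim x)
    show ?case
    proof (cases "z < x")
      case True
      then have "eventually (\<lambda>n. S n < x) sequentially" using S by (simp add: order_tendstoD)
      then have "eventually (\<lambda>n. indicator {S n<..} x * f x = indicator {z<..} x * f x) sequentially"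
        by eventually_elim (use True in auto)
      then show ?thesis by (rule tendsto_eventually)
    next
      case False
      then have "x < z" using elim by auto
      then have "eventually (\<lambda>n. x < S n) sequentially" using S by (simp add: order_tendstoD)
      then have "eventually (\<lambda>n. indicator {S n<..} x * f x = indicator {z<..} x * f x) sequentially"
        by eventually_elim (use False in auto)
      then show ?thesis by (rule tendsto_eventually)
    qed
  qed
qed

lemma Ar_cont:
  fixes f :: "real \<Rightarrow> real"
  assumes f: "integrable lborel f"
  shows "isCont (Ar f) z"
  unfolding isCont_def
  using Ar_seq[OF f] LIMSEQ_SEQ_conv[of z "Ar f" "Ar f z"] by blast

lemma Ar_top:
  fixes f :: "real \<Rightarrow> real"
  assumes f: "integrable lborel f"
  shows "(Ar f \<longlongrightarrow> 0) at_top"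
proof (rule tendsto_at_topI_sequentially)
  fix X :: "nat \<Rightarrow> real" assume X: "filterlim X at_top sequentially"
  have "(\<lambda>n. LINT x|lborel. indicator {X n<..} x * f x) \<longlonglongrightarrow> (LINT (x::real)|lborel. (0::real))"
  proof (rule integral_dominated_convergence[where w="\<lambda>x. \<bar>f x\<bar>" and f="\<lambda>x. 0"
        and s="\<lambda>n x. indicator {X n<..} x * f x"])
    show "(\<lambda>x. indicator {X i<..} x * f x) \<in> borel_measurable lborel" for i
      using int_ind[OF f, of "{X i<..}"] by auto
    show "integrable lborel (\<lambda>x. \<bar>f x\<bar>)" using f by auto
    show "AE x in lborel. norm (indicator {X i<..} x * f x) \<le> \<bar>f x\<bar>" for i
      by (auto simp: indicator_def)
    show "AE x in lborel. (\<lambda>i. indicator {X i<..} x * f x) \<longlonglongrightarrow> 0"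
    proof (rule AE_I2)
      fix x
      have "eventually (\<lambda>n. x \<le> X n) sequentially" using X by (simp add: filterlim_at_top)
      then have "eventually (\<lambda>n. indicator {X n<..} x * f x = 0) sequentially"
        by eventually_elim auto
      then show "(\<lambda>i. indicator {X i<..} x * f x) \<longlonglongrightarrow> 0" by (rule tendsto_eventually)
    qed
  qed simp
  then show "(\<lambda>n. Ar f (X n)) \<longlonglongrightarrow> 0" by (simp add: Ar_def)
qed

lemma Ar_bot:
  fixes f :: "real \<Rightarrow> real"
  assumes f: "integrable lborel f"
  shows "(Ar f \<longlongrightarrow> (LINT x|lborel. f x)) at_bot"
proof (rule tendsto_at_botI_sequentially)
  fix X :: "nat \<Rightarrow> real" assume X: "filterlim X at_bot sequentially"
  have "(\<lambda>n. LINT x|lborel. indicator {X n<..} x * f x) \<longlonglongrightarrow> (LINT x|lborel. f x)"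
  proof (rule integral_dominated_convergence[where w="\<lambda>x. \<bar>f x\<bar>"])
    show "(\<lambda>x. indicator {X i<..} x * f x) \<in> borel_measurable lborel" for i
      using int_ind[OF f, of "{X i<..}"] by auto
    show "f \<in> borel_measurable lborel" using f by auto
    show "integrable lborel (\<lambda>x. \<bar>f x\<bar>)" using f by auto
    show "AE x in lborel. norm (indicator {X i<..} x * f x) \<le> \<bar>f x\<bar>" for i
      by (auto simp: indicator_def)
    show "AE x in lborel. (\<lambda>i. indicator {X i<..} x * f x) \<longlonglongrightarrow> f x"
    proof (rule AE_I2)
      fix x
      have "eventually (\<lambda>n. X n < x) sequentially" using X by (simp add: filterlim_at_bot_dense)
      then have "eventually (\<lambda>n. indicator {X n<..} x * f x = f x) sequentially"
        by eventually_elim auto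
      then show "(\<lambda>i. indicator {X i<..} x * f x) \<longlonglongrightarrow> f x" by (rule tendsto_eventually)
    qed
  qed
  then show "(\<lambda>n. Ar f (X n)) \<longlonglongrightarrow> (LINT x|lborel. f x)" by (simp add: Ar_def)
qed

lemma int_pos:
  fixes g :: "real \<Rightarrow> real"
  assumes g: "integrable lborel g" and S: "S \<in> sets borel" and ab: "a < b" "{a<..<b} \<subseteq> S"
    and gp: "\<And>x. x \<in> S \<Longrightarrow> 0 < g x"
  shows "0 < (LINT x|lborel. indicator S x * g x)"
proof -
  have i: "integrable lborel (\<lambda>x. indicator S x * g x)" using int_ind[OF g S] .
  have nn: "AE x in lborel. 0 \<le> indicator S x * g x"
    using gp by (auto simp: indicator_def intro!: AE_I2 less_imp_le)
  have ge: "0 \<le> (LINT x|lborel. indicator S x * g x)"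
    using nn by (intro integral_nonneg_AE) 
  have "(LINT x|lborel. indicator S x * g x) \<noteq> 0"
  proof
    assume "(LINT x|lborel. indicator S x * g x) = 0"
    then have "AE x in lborel. indicator S x * g x = 0"
      using integral_nonneg_eq_0_iff_AE[OF i nn] by simp
    then have "AE x in lborel. x \<notin> {a<..<b}"
    proof eventually_elim
      case (elim x)
      show ?case
      proof
        assume "x \<in> {a<..<b}"
        then have "x \<in> S" "0 < g x" using ab gp by auto
        with elim show False by simp
      qed
    qed
    then have "emeasure lborel {a<..<b} = 0"
      by (subst (asm) AE_iff_measurable[of "{a<..<b}"]) auto
    then show False using ab by simp
  qed
  then show ?thesis using ge by simp
qed

lemma Ar_diff:
  fixes f :: "real \<Rightarrow> real"
  assumes f: "integrable lborel f" and z: "z1 \<le> z2"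
  shows "Ar f z1 - Ar f z2 = (LINT x|lborel. indicator {z1<..z2} x * f x)"
proof -
  have "Ar f z1 - Ar f z2 = (LINT x|lborel. indicator {z1<..} x * f x - indicator {z2<..} x * f x)"
    unfolding Ar_def using Bochner_Integration.integral_diff[OF int_ind[OF f, of "{z1<..}", simplified] int_ind[OF f, of "{z2<..}", simplified]] by simp
  also have "\<dots> = (LINT x|lborel. indicator {z1<..z2} x * f x)"
    by (rule Bochner_Integration.integral_cong) (use z in \<open>auto simp: indicator_def\<close>)
  finally show ?thesis .
qed


lemma Ar_pos:
  fixes f :: "real \<Rightarrow> real"
  assumes f: "integrable lborel f" "\<And>x. 0 < f x"
  shows "0 < Ar f z"
  unfolding Ar_def using f by (intro int_pos[where a=z and b="z+1"]) auto

lemma Ar_strict: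
  fixes f :: "real \<Rightarrow> real"
  assumes f: "integrable lborel f" "\<And>x. 0 < f x" and z: "z1 < z2"
  shows "Ar f z2 < Ar f z1"
proof -
  have "0 < (LINT x|lborel. indicator {z1<..z2} x * f x)"
    using f z by (intro int_pos[where a=z1 and b=z2]) auto
  then show ?thesis using Ar_diff[OF f(1), of z1 z2] z by simp
qed

lemma mlr:
  fixes f h :: "real \<Rightarrow> real"
  assumes f: "integrable lborel f" "\<And>x. 0 < f x"
    and h: "integrable lborel h" "\<And>x. 0 < h x"
    and L: "strict_mono (\<lambda>x. f x / h x)" and z: "z1 < z2"
  shows "Ar f z1 * Ar h z2 < Ar f z2 * Ar h z1"
proof -
  define c where "c = f z2 / h z2"
  define Df where "Df = Ar f z1 - Ar f z2"
  define Dh where "Dh = Ar h z1 - Ar h z2"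
  have Dfe: "Df = (LINT x|lborel. indicator {z1<..z2} x * f x)"
    using Ar_diff[OF f(1), of z1 z2] z by (simp add: Df_def)
  have Dhe: "Dh = (LINT x|lborel. indicator {z1<..z2} x * h x)"
    using Ar_diff[OF h(1), of z1 z2] z by (simp add: Dh_def)
  have "Df \<le> (LINT x|lborel. c * (indicator {z1<..z2} x * h x))"
    unfolding Dfe
  proof (rule integral_mono)
    show "integrable lborel (\<lambda>x. indicator {z1<..z2} x * f x)" using int_ind[OF f(1)] by simp
    show "integrable lborel (\<lambda>x. c * (indicator {z1<..z2} x * h x))" using int_ind[OF h(1)] by simp
    fix x
    show "indicator {z1<..z2} x * f x \<le> c * (indicator {z1<..z2} x * h x)"
    proof (cases "x \<in> {z1<..z2}")
      case True
      then have "f x / h x \<le> c" unfolding c_def using strict_mono_less_eq[OF L, of x z2] by auto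
      then have "f x \<le> c * h x" using h(2)[of x] by (simp add: divide_le_eq)
      then show ?thesis using True by simp
    qed simp
  qed
  then have Dfle: "Df \<le> c * Dh" by (simp add: Dhe)
  have "0 < (LINT x|lborel. indicator {z2<..} x * (f x - c * h x))"
  proof (rule int_pos[where a=z2 and b="z2+1"])
    show "integrable lborel (\<lambda>x. f x - c * h x)" using f h by auto
    fix x assume "x \<in> {z2<..}"
    then have "c < f x / h x" unfolding c_def using strict_mono_less[OF L, of z2 x] by auto
    then show "0 < f x - c * h x" using h(2)[of x] by (simp add: less_divide_eq)
  qed auto
  also have "(LINT x|lborel. indicator {z2<..} x * (f x - c * h x)) = Ar f z2 - c * Ar h z2"
  proof -
    have "(LINT x|lborel. indicator {z2<..} x * (f x - c * h x))
        = (LINT x|lborel. indicator {z2<..} x * f x - c * (indicator {z2<..} x * h x))"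
      by (simp add: algebra_simps)
    also have "\<dots> = Ar f z2 - c * Ar h z2"
      unfolding Ar_def
      using Bochner_Integration.integral_diff[OF int_ind[OF f(1), of "{z2<..}", simplified]
          integrable_mult_right[OF int_ind[OF h(1), of "{z2<..}", simplified], of c]] by simp
    finally show ?thesis .
  qed
  finally have Af2: "c * Ar h z2 < Ar f z2" by simp
  have Dh0: "0 < Dh" using Ar_strict[OF h z] by (simp add: Dh_def)
  have Ah2: "0 < Ar h z2" using Ar_pos[OF h] .
  have "Ar f z1 * Ar h z2 = Ar f z2 * Ar h z2 + Df * Ar h z2" by (simp add: Df_def algebra_simps)
  also have "\<dots> \<le> Ar f z2 * Ar h z2 + c * Dh * Ar h z2"
    using Dfle Ah2 by (simp add: mult_right_mono)
  also have "\<dots> < Ar f z2 * Ar h z2 + Ar f z2 * Dh"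
    using Af2 Dh0 by (simp add: mult.commute mult.left_commute)
  also have "\<dots> = Ar f z2 * Ar h z1" by (simp add: Dh_def algebra_simps)
  finally show ?thesis .
qed


lemma regret_lim:
  fixes s1 s2 :: "real \<Rightarrow> real"
  assumes xs: "0 < xq + xu"
    and c1: "isCont s1 z0" and c2: "isCont s2 z0"
    and eq: "s1 z0 = s0" "s2 z0 = s0"
    and m1: "\<And>z. z0 < z \<Longrightarrow> s0 < s1 z"
    and m2: "\<And>z. z < z0 \<Longrightarrow> s0 < s2 z"
  shows "\<exists>L. ((\<lambda>z. regret xq xu c Q (s1 z)) \<longlongrightarrow> L) (at_right z0) \<and>
             ((\<lambda>z. regret xq xu c Q (s2 z)) \<longlongrightarrow> L) (at_left z0)"
proof -
  define n0 where "n0 = netv xq xu s0"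
  define acc :: real where "acc = (if c \<le> n0 then 1 else 0)"
  define K where "K = Q * xq - (1 - Q) * xu"
  have netv_lin: "netv xq xu s = s * (xq + xu) - xu" for s by (simp add: netv_def algebra_simps)
  have netv_mono: "s0 < s \<Longrightarrow> n0 < netv xq xu s" for s
    unfolding n0_def netv_lin using xs by (simp add: mult_strict_right_mono)
  have cn1: "((\<lambda>z. netv xq xu (s1 z)) \<longlongrightarrow> n0) (at z0)"
    unfolding n0_def netv_def using c1 eq by (auto intro!: tendsto_intros simp: isCont_def)
  have cn2: "((\<lambda>z. netv xq xu (s2 z)) \<longlongrightarrow> n0) (at z0)"
    unfolding n0_def netv_def using c2 eq by (auto intro!: tendsto_intros simp: isCont_def)
  have gen: "eventually (\<lambda>z. accept' xq xu c (s z) = acc) F"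
    if F: "F \<le> at z0" and cn: "((\<lambda>z. netv xq xu (s z)) \<longlongrightarrow> n0) (at z0)"
      and ev: "eventually (\<lambda>z. s0 < s z) F" for s F
  proof (cases "c < n0")
    case True
    have "eventually (\<lambda>z. c < netv xq xu (s z)) (at z0)" using order_tendstoD(1)[OF cn True] .
    then have "eventually (\<lambda>z. c < netv xq xu (s z)) F" by (rule filter_leD[OF F])
    then show ?thesis by eventually_elim (use True in \<open>auto simp: accept'_def acc_def\<close>)
  next
    case False
    show ?thesis
    proof (cases "n0 < c")
      case True
      have "eventually (\<lambda>z. netv xq xu (s z) < c) (at z0)" using order_tendstoD(2)[OF cn True] .
      then have "eventually (\<lambda>z. netv xq xu (s z) < c) F" by (rule filter_leD[OF F])
      then show ?thesis by eventually_elim (use True in \<open>auto simp: accept'_def acc_def\<close>)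
    next
      case False2: False
      then have "c = n0" using False by simp
      from ev show ?thesis
        by eventually_elim (use \<open>c = n0\<close> netv_mono in \<open>auto simp: accept'_def acc_def\<close>)
    qed
  qed
  have F1: "at_right z0 \<le> at z0" by (rule at_le) simp
  have F2: "at_left z0 \<le> at z0" by (rule at_le) simp
  have e1: "eventually (\<lambda>z. s0 < s1 z) (at_right z0)"
    using eventually_at_right_less[of z0] by eventually_elim (rule m1)
  have e2: "eventually (\<lambda>z. s0 < s2 z) (at_left z0)"
  proof -
    have "z0 - 1 < z0" by simp
    from eventually_at_left_real[OF this] show ?thesis by eventually_elim (auto intro: m2)
  qed
  have a1: "eventually (\<lambda>z. accept' xq xu c (s1 z) = acc) (at_right z0)" by (rule gen[OF F1 cn1 e1])
  have a2: "eventually (\<lambda>z. accept' xq xu c (s2 z) = acc) (at_left z0)" by (rule gen[OF F2 cn2 e2])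
  have l1: "((\<lambda>z. netv xq xu (s1 z) - acc * K) \<longlongrightarrow> n0 - acc * K) (at_right z0)"
    using tendsto_mono[OF F1 cn1] by (auto intro!: tendsto_intros)
  have l2: "((\<lambda>z. netv xq xu (s2 z) - acc * K) \<longlongrightarrow> n0 - acc * K) (at_left z0)"
    using tendsto_mono[OF F2 cn2] by (auto intro!: tendsto_intros)
  have "((\<lambda>z. regret xq xu c Q (s1 z)) \<longlongrightarrow> n0 - acc * K) (at_right z0)"
    by (rule Lim_transform_eventually[OF l1]) (use a1 in \<open>eventually_elim, simp add: regret_def payoff_def K_def\<close>)
  moreover have "((\<lambda>z. regret xq xu c Q (s2 z)) \<longlongrightarrow> n0 - acc * K) (at_left z0)"
    by (rule Lim_transform_eventually[OF l2]) (use a2 in \<open>eventually_elim, simp add: regret_def payoff_def K_def\<close>)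
  ultimately show ?thesis by blast
qed


locale mlrset =
  fixes f h :: "real \<Rightarrow> real" and p :: real
  assumes fi: "integrable lborel f" and fp: "\<And>x. 0 < f x"
    and hi: "integrable lborel h" and hp: "\<And>x. 0 < h x"
    and L: "strict_mono (\<lambda>x. f x / h x)" and p0: "0 < p" and p1: "p < 1"
begin

definition "T z = p * Ar f z + (1 - p) * Ar h z"
definition "N = p * (LINT x|lborel. f x) + (1 - p) * (LINT x|lborel. h x)"
definition "S1 z = p * Ar f z / T z"
definition "S2 z = T z / N"
definition "ph = p * (LINT x|lborel. f x) / N"

lemma Hf: "0 < (LINT x|lborel. f x)"
  using int_pos[OF fi, of UNIV 0 1] fp by simp
lemma Hh: "0 < (LINT x|lborel. h x)"
  using int_pos[OF hi, of UNIV 0 1] hp by simp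
lemma Npos: "0 < N" unfolding N_def using Hf Hh p0 p1 by (simp add: add_pos_pos)
lemma Afp: "0 < Ar f z" using Ar_pos[OF fi fp] .
lemma Ahp: "0 < Ar h z" using Ar_pos[OF hi hp] .
lemma Tpos: "0 < T z" unfolding T_def using Afp[of z] Ahp[of z] p0 p1 by (simp add: add_pos_pos)

lemma S1_strict: assumes z: "z1 < z2" shows "S1 z1 < S1 z2"
proof -
  have m: "Ar f z1 * Ar h z2 < Ar f z2 * Ar h z1" by (rule mlr[OF fi fp hi hp L z])
  have pp: "0 < p * (1 - p)" using p0 p1 by simp
  have "p * (1 - p) * (Ar f z1 * Ar h z2) < p * (1 - p) * (Ar f z2 * Ar h z1)"
    using mult_strict_left_mono[OF m pp] .
  then have "p * Ar f z1 * T z2 < p * Ar f z2 * T z1"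
    unfolding T_def by (simp add: algebra_simps)
  then show ?thesis unfolding S1_def using Tpos[of z1] Tpos[of z2]
    by (simp add: divide_less_eq less_divide_eq mult.commute mult.left_commute)
qed

lemma S2_strict: assumes z: "z1 < z2" shows "S2 z2 < S2 z1"
proof -
  have "T z2 < T z1" unfolding T_def using Ar_strict[OF fi fp z] Ar_strict[OF hi hp z] p0 p1
    by (intro add_strict_mono) auto
  then show ?thesis unfolding S2_def using Npos by (simp add: divide_strict_right_mono)
qed

lemma S1_cont: "isCont S1 z"
proof -
  have "isCont (\<lambda>z. p * Ar f z / (p * Ar f z + (1 - p) * Ar h z)) z"
    using Tpos[of z] unfolding T_def
    by (intro continuous_intros Ar_cont[OF fi] Ar_cont[OF hi]) auto
  then show ?thesis unfolding S1_def[abs_def] T_def .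
qed

lemma S2_cont: "isCont S2 z"
proof -
  have "isCont (\<lambda>z. (p * Ar f z + (1 - p) * Ar h z) / N) z"
    using Npos by (intro continuous_intros Ar_cont[OF fi] Ar_cont[OF hi]) auto
  then show ?thesis unfolding S2_def[abs_def] T_def .
qed

lemma S1_bot: "(S1 \<longlongrightarrow> ph) at_bot"
proof -
  have "((\<lambda>z. p * Ar f z / (p * Ar f z + (1 - p) * Ar h z)) \<longlongrightarrow>
      p * (LINT x|lborel. f x) / N) at_bot"
    unfolding N_def using Npos unfolding N_def
    by (intro tendsto_intros Ar_bot[OF fi] Ar_bot[OF hi]) auto
  then show ?thesis unfolding S1_def[abs_def] T_def ph_def .
qed

lemma S2_bot: "(S2 \<longlongrightarrow> 1) at_bot"
proof -
  have "((\<lambda>z. (p * Ar f z + (1 - p) * Ar h z) / N) \<longlongrightarrow> N / N) at_bot"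
    unfolding N_def using Npos unfolding N_def
    by (intro tendsto_intros Ar_bot[OF fi] Ar_bot[OF hi]) auto
  then show ?thesis unfolding S2_def[abs_def] T_def using Npos by simp
qed

lemma S2_top: "(S2 \<longlongrightarrow> 0) at_top"
proof -
  have "((\<lambda>z. (p * Ar f z + (1 - p) * Ar h z) / N) \<longlongrightarrow> (p * 0 + (1 - p) * 0) / N) at_top"
    using Npos by (intro tendsto_intros Ar_top[OF fi] Ar_top[OF hi]) auto
  then show ?thesis unfolding S2_def[abs_def] T_def by simp
qed

lemma ph_pos: "0 < ph" unfolding ph_def using p0 Hf Npos by simp
lemma ph_lt1: "ph < 1" unfolding ph_def using Npos p0 p1 Hh by (simp add: divide_less_eq N_def)

lemma ph_le: "ph \<le> S1 z"
proof (rule tendsto_upperbound[OF S1_bot])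
  show "eventually (\<lambda>y. S1 y \<le> S1 z) at_bot"
    unfolding eventually_at_bot_linorder
    by (rule exI[of _ z]) (auto intro: less_imp_le S1_strict simp: order_le_less)
qed simp

lemma cross: "\<exists>!z. S1 z = S2 z"
proof -
  define D where "D z = S1 z - S2 z" for z
  have Dm: "z1 < z2 \<Longrightarrow> D z1 < D z2" for z1 z2
    unfolding D_def using S1_strict[of z1 z2] S2_strict[of z1 z2] by simp
  have "(D \<longlongrightarrow> ph - 1) at_bot" unfolding D_def[abs_def] by (intro tendsto_intros S1_bot S2_bot)
  then have "eventually (\<lambda>z. D z < 0) at_bot" using ph_lt1 by (intro order_tendstoD) auto
  then obtain z1 where z1: "D z1 < 0" unfolding eventually_at_bot_linorder by auto
  have "eventually (\<lambda>z. S2 z < ph) at_top" using S2_top ph_pos by (intro order_tendstoD) auto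
  then obtain z2 where z2: "S2 z2 < ph" unfolding eventually_at_top_linorder by auto
  have D2: "0 < D z2" using z2 ph_le[of z2] unfolding D_def by simp
  have "z1 \<le> z2"
  proof (rule ccontr)
    assume "\<not> z1 \<le> z2" then have "D z2 < D z1" using Dm by simp
    with z1 D2 show False by simp
  qed
  moreover have "\<forall>x. z1 \<le> x \<and> x \<le> z2 \<longrightarrow> isCont D x"
    unfolding D_def[abs_def] using S1_cont S2_cont by (auto intro!: continuous_intros)
  ultimately obtain z where "D z = 0" using IVT[of D z1 0 z2] z1 D2 by auto
  then have ex: "S1 z = S2 z" unfolding D_def by simp
  show ?thesis
  proof (rule ex1I[of _ z])
    show "S1 z = S2 z" by fact
    fix y assume "S1 y = S2 y"
    then have "D y = D z" using ex unfolding D_def by simp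
    then show "y = z" using Dm[of y z] Dm[of z y] by (cases "y < z"; cases "z < y") auto
  qed
qed

end


lemma thr_alt:
  assumes "0 < \<pi>" "\<tau> < xq"
  shows "thr \<pi> xq xu \<tau> = ((1 - \<pi>) / \<pi>) * ((xq + xu) / (xq - \<tau>) - 1)"
  using assms unfolding thr_def by (simp add: field_simps)

lemma thr_pos:
  assumes "0 < \<pi>" "\<pi> < 1" "- xu < \<tau>" "\<tau> < xq"
  shows "0 < thr \<pi> xq xu \<tau>"
  using assms unfolding thr_def by (intro divide_pos_pos mult_pos_pos) auto

lemma thr_strict:
  assumes "0 < \<pi>" "\<pi> < 1" "0 < xq + xu" "\<tau>1 < \<tau>2" "\<tau>2 < xq"
  shows "thr \<pi> xq xu \<tau>1 < thr \<pi> xq xu \<tau>2"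
proof -
  have "(xq + xu) / (xq - \<tau>1) < (xq + xu) / (xq - \<tau>2)"
    using assms by (intro divide_strict_left_mono) auto
  then have "((1 - \<pi>) / \<pi>) * ((xq + xu) / (xq - \<tau>1) - 1) < ((1 - \<pi>) / \<pi>) * ((xq + xu) / (xq - \<tau>2) - 1)"
    using assms by (intro mult_strict_left_mono) auto
  then show ?thesis using assms by (simp add: thr_alt)
qed

lemma thr_inv:
  assumes "0 < \<pi>" "\<pi> < 1" "0 < xq" "0 < xu" "0 < y"
  defines "k \<equiv> (1 - \<pi>) / \<pi>"
  shows "- xu < (y * xq - k * xu) / (y + k) \<and> (y * xq - k * xu) / (y + k) < xq
       \<and> thr \<pi> xq xu ((y * xq - k * xu) / (y + k)) = y"
proof -
  have k: "0 < k" unfolding k_def using assms by simp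
  have a: "xu + (y * xq - k * xu) / (y + k) = y * (xq + xu) / (y + k)"
    using k assms(5) by (simp add: field_simps)
  have b: "xq - (y * xq - k * xu) / (y + k) = k * (xq + xu) / (y + k)"
    using k assms(5) by (simp add: field_simps)
  have "0 < y * (xq + xu) / (y + k)" using assms(3-5) k by simp
  moreover have "0 < k * (xq + xu) / (y + k)" using assms(3-5) k by simp
  moreover have "thr \<pi> xq xu ((y * xq - k * xu) / (y + k)) = y"
  proof -
    have "thr \<pi> xq xu ((y * xq - k * xu) / (y + k)) = (1 - \<pi>) * (y * (xq + xu) / (y + k)) / (\<pi> * (k * (xq + xu) / (y + k)))"
      unfolding thr_def a b ..
    also have "\<dots> = (\<pi> * k) * (y * (xq + xu) / (y + k)) / (\<pi> * (k * (xq + xu) / (y + k)))"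
      using assms(1) unfolding k_def by simp
    also have "\<dots> = y"
    proof -
      have ne: "y + k \<noteq> 0" "xq + xu \<noteq> 0" "k \<noteq> 0" "\<pi> \<noteq> 0" using assms(1-5) k by auto
      have "(\<pi> * k) * (y * (xq + xu) / (y + k)) = y * (\<pi> * (k * (xq + xu) / (y + k)))" by simp
      moreover have "\<pi> * (k * (xq + xu) / (y + k)) \<noteq> 0" using ne by simp
      ultimately show ?thesis by simp
    qed
    finally show ?thesis .
  qed
  ultimately show ?thesis using a b by linarith
qed


theorem mainTheorem12:
  fixes hq hu :: "real \<Rightarrow> real \<Rightarrow> real"
    and \<pi> xq xu c \<theta> Q :: real
  assumes pi: "0 < \<pi>" "\<pi> < 1"
    and pay: "0 < xq" "0 < xu"
    and cut: "- xu < c" "c < xq"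
    and pos: "\<forall>t g. 0 < hq t g" "\<forall>t g. 0 < hu t g"
    and dens_q: "integrable lborel (\<lambda>p::real \<times> real. hq (fst p) (snd p))"
                "(LINT p|lborel. hq (fst p) (snd p)) = 1"
    and dens_u: "integrable lborel (\<lambda>p::real \<times> real. hu (fst p) (snd p))"
                "(LINT p|lborel. hu (fst p) (snd p)) = 1"
    and sect: "\<forall>t. integrable lborel (hq t)" "\<forall>t. integrable lborel (hu t)"
    and lcont: "continuous_on UNIV (\<lambda>p::real \<times> real. lr hq hu (fst p) (snd p))"
    and lmono1: "\<forall>g. strict_mono (\<lambda>t. lr hq hu t g)"
    and lmono2: "\<forall>t. strict_mono (lr hq hu t)"
    and linf: "\<forall>t. \<forall>\<epsilon>>0. \<exists>g. lr hq hu t g < \<epsilon>"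
    and lsup: "\<forall>t. \<forall>M. \<exists>g. M < lr hq hu t g"
    and hphi: "phi hq hu \<pi> \<theta> < (xu + c) / (xq + xu)"
    and hQ: "Q = 0 \<or> Q = 1"
  shows "\<exists>L. ((\<lambda>\<tau>. regret xq xu c Q (s1 hq hu \<pi> xq xu \<theta> \<tau>)) \<longlongrightarrow> L)
                (at_right (tau_star hq hu \<pi> xq xu \<theta>)) \<and>
             ((\<lambda>\<tau>. regret xq xu c Q (s2 hq hu \<pi> xq xu \<theta> \<tau>)) \<longlongrightarrow> L)
                (at_left (tau_star hq hu \<pi> xq xu \<theta>))"
proof -
  have xs: "0 < xq + xu" using pay by simp
  define Lt where "Lt = lr hq hu \<theta>"
  have Lt_eq: "Lt x = hq \<theta> x / hu \<theta> x" for x by (simp add: Lt_def lr_def)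
  have Lsm: "strict_mono Lt" using lmono2 by (simp add: Lt_def)
  have Lm: "strict_mono (\<lambda>x. hq \<theta> x / hu \<theta> x)" using Lsm by (simp add: Lt_eq[symmetric])
  interpret M: mlrset "hq \<theta>" "hu \<theta>" \<pi>
    using sect pos pi Lm by unfold_locales auto
  have "continuous_on UNIV (\<lambda>\<gamma>. lr hq hu (fst (\<theta>, \<gamma>)) (snd (\<theta>, \<gamma>)))"
    by (rule continuous_on_compose2[OF lcont]) (auto intro: continuous_intros)
  then have "continuous_on UNIV Lt" by (simp add: Lt_def)
  then have Lcont: "isCont Lt x" for x by (simp add: continuous_on_eq_continuous_at)
  have surj: "\<exists>\<gamma>. Lt \<gamma> = y" if y: "0 < y" for y
  proof -
    obtain g1 where g1: "Lt g1 < y" using linf y by (auto simp: Lt_def)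
    obtain g2 where g2: "y < Lt g2" using lsup by (auto simp: Lt_def)
    have "g1 \<le> g2"
    proof (rule ccontr)
      assume "\<not> g1 \<le> g2" then have "Lt g2 < Lt g1" using strict_monoD[OF Lsm] by simp
      with g1 g2 show False by simp
    qed
    then show ?thesis using IVT[of Lt g1 y g2] g1 g2 Lcont by auto
  qed
  define G where "G \<tau> = (SOME \<gamma>. Lt \<gamma> = thr \<pi> xq xu \<tau>)" for \<tau>
  have GL: "Lt (G \<tau>) = thr \<pi> xq xu \<tau>" if "- xu < \<tau>" "\<tau> < xq" for \<tau>
    unfolding G_def by (rule someI_ex, rule surj, rule thr_pos) (use pi that in auto)
  have set_eq: "{\<gamma>. lr hq hu \<theta> \<gamma> > thr \<pi> xq xu \<tau>} = {G \<tau><..}" if "- xu < \<tau>" "\<tau> < xq" for \<tau>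
  proof -
    have "thr \<pi> xq xu \<tau> < lr hq hu \<theta> x \<longleftrightarrow> G \<tau> < x" for x
      using GL[OF that] strict_mono_less[OF Lsm, of "G \<tau>" x] by (simp add: Lt_def)
    then show ?thesis by auto
  qed
  have acc: "accmass k hq hu \<pi> xq xu \<theta> \<tau> = Ar (k \<theta>) (G \<tau>)" if "- xu < \<tau>" "\<tau> < xq" for \<tau> k
    unfolding accmass_def Ar_def set_eq[OF that] ..
  have s1eq: "s1 hq hu \<pi> xq xu \<theta> \<tau> = M.S1 (G \<tau>)" if "- xu < \<tau>" "\<tau> < xq" for \<tau>
    unfolding s1_def M.S1_def M.T_def acc[OF that] ..
  have s2eq: "s2 hq hu \<pi> xq xu \<theta> \<tau> = M.S2 (G \<tau>)" if "- xu < \<tau>" "\<tau> < xq" for \<tau>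
    unfolding s2_def M.S2_def M.T_def M.N_def acc[OF that] ..
  obtain z0 where z0: "M.S1 z0 = M.S2 z0" and z0u: "\<And>z. M.S1 z = M.S2 z \<Longrightarrow> z = z0"
    using M.cross by blast
  define y0 where "y0 = Lt z0"
  have y0: "0 < y0" unfolding y0_def Lt_eq using pos by (simp add: divide_pos_pos)
  define k where "k = (1 - \<pi>) / \<pi>"
  define \<tau>0 where "\<tau>0 = (y0 * xq - k * xu) / (y0 + k)"
  have t0: "- xu < \<tau>0" "\<tau>0 < xq" "thr \<pi> xq xu \<tau>0 = y0"
    using thr_inv[OF pi pay y0] unfolding \<tau>0_def k_def by auto
  have thrs: "thr \<pi> xq xu a < thr \<pi> xq xu b" if "a < b" "b < xq" for a b
    using thr_strict[OF pi xs that] .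
  have thrinj: "a = b" if "- xu < a" "a < xq" "- xu < b" "b < xq" "thr \<pi> xq xu a = thr \<pi> xq xu b" for a b
    using thrs[of a b] thrs[of b a] that by (cases "a < b"; cases "b < a") auto
  have Ginj: "a = b" if "Lt a = Lt b" for a b
    using strict_mono_eq[OF Lsm] that by simp
  have Gt0: "G \<tau>0 = z0" using GL[OF t0(1,2)] t0(3) Ginj unfolding y0_def by simp
  have ts: "tau_star hq hu \<pi> xq xu \<theta> = \<tau>0"
    unfolding tau_star_def
  proof (rule the_equality)
    show "- xu < \<tau>0 \<and> \<tau>0 < xq \<and> s1 hq hu \<pi> xq xu \<theta> \<tau>0 = s2 hq hu \<pi> xq xu \<theta> \<tau>0"
      using t0 s1eq[OF t0(1,2)] s2eq[OF t0(1,2)] Gt0 z0 by simp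
    fix \<tau> assume a: "- xu < \<tau> \<and> \<tau> < xq \<and> s1 hq hu \<pi> xq xu \<theta> \<tau> = s2 hq hu \<pi> xq xu \<theta> \<tau>"
    then have "G \<tau> = z0" using s1eq s2eq z0u by auto
    then have "thr \<pi> xq xu \<tau> = thr \<pi> xq xu \<tau>0" using GL a t0 unfolding y0_def by auto
    then show "\<tau> = \<tau>0" using thrinj a t0 by blast
  qed
  have Gmono: "z0 < G \<tau>" if "\<tau>0 < \<tau>" "\<tau> < xq" for \<tau>
  proof -
    have "Lt z0 < Lt (G \<tau>)" using GL[of \<tau>] thrs[OF that] t0 that unfolding y0_def by simp
    then show ?thesis using strict_mono_less[OF Lsm] by simp
  qed
  have Gmono2: "G \<tau> < z0" if "- xu < \<tau>" "\<tau> < \<tau>0" for \<tau>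
  proof -
    have "Lt (G \<tau>) < Lt z0" using GL[of \<tau>] thrs[of \<tau> \<tau>0] t0 that unfolding y0_def by simp
    then show ?thesis using strict_mono_less[OF Lsm] by simp
  qed
  have evR: "eventually (\<lambda>\<tau>. \<tau> \<in> {\<tau>0<..<xq}) (at_right \<tau>0)"
    using eventually_at_right_real[OF t0(2)] .
  have evL: "eventually (\<lambda>\<tau>. \<tau> \<in> {-xu<..<\<tau>0}) (at_left \<tau>0)"
    using eventually_at_left_real[OF t0(1)] .
  have FR: "filterlim G (at_right z0) (at_right \<tau>0)"
  proof (rule tendsto_imp_filterlim_at_right)
    show ev: "eventually (\<lambda>\<tau>. z0 < G \<tau>) (at_right \<tau>0)"
      using evR by eventually_elim (auto intro: Gmono)
    show "(G \<longlongrightarrow> z0) (at_right \<tau>0)"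
    proof (rule order_tendstoI)
      fix a assume "a < z0"
      from ev show "eventually (\<lambda>\<tau>. a < G \<tau>) (at_right \<tau>0)"
        by eventually_elim (use \<open>a < z0\<close> in auto)
    next
      fix a assume a: "z0 < a"
      have ya: "0 < Lt a" using y0 strict_monoD[OF Lsm a] unfolding y0_def by simp
      define \<tau>a where "\<tau>a = (Lt a * xq - k * xu) / (Lt a + k)"
      have ta: "- xu < \<tau>a" "\<tau>a < xq" "thr \<pi> xq xu \<tau>a = Lt a"
        using thr_inv[OF pi pay ya] unfolding \<tau>a_def k_def by auto
      have "\<tau>0 < \<tau>a"
      proof (rule ccontr)
        assume "\<not> \<tau>0 < \<tau>a"
        then have "thr \<pi> xq xu \<tau>a \<le> thr \<pi> xq xu \<tau>0" using thrs[of \<tau>a \<tau>0] t0 by (cases "\<tau>a = \<tau>0") auto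
        then have "Lt a \<le> Lt z0" using ta t0 unfolding y0_def by simp
        then show False using strict_monoD[OF Lsm a] by simp
      qed
      from eventually_at_right_real[OF this]
      show "eventually (\<lambda>\<tau>. G \<tau> < a) (at_right \<tau>0)"
      proof eventually_elim
        case (elim \<tau>)
        then have "Lt (G \<tau>) < Lt a" using GL[of \<tau>] thrs[of \<tau> \<tau>a] t0 ta by auto
        then show ?case using strict_mono_less[OF Lsm] by simp
      qed
    qed
  qed
  have FL: "filterlim G (at_left z0) (at_left \<tau>0)"
  proof (rule tendsto_imp_filterlim_at_left)
    show ev: "eventually (\<lambda>\<tau>. G \<tau> < z0) (at_left \<tau>0)"
      using evL by eventually_elim (auto intro: Gmono2)
    show "(G \<longlongrightarrow> z0) (at_left \<tau>0)"
    proof (rule order_tendstoI)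
      fix a assume "z0 < a"
      from ev show "eventually (\<lambda>\<tau>. G \<tau> < a) (at_left \<tau>0)"
        by eventually_elim (use \<open>z0 < a\<close> in auto)
    next
      fix a assume a: "a < z0"
      have ya: "0 < Lt a" unfolding Lt_eq using pos by (simp add: divide_pos_pos)
      define \<tau>a where "\<tau>a = (Lt a * xq - k * xu) / (Lt a + k)"
      have ta: "- xu < \<tau>a" "\<tau>a < xq" "thr \<pi> xq xu \<tau>a = Lt a"
        using thr_inv[OF pi pay ya] unfolding \<tau>a_def k_def by auto
      have "\<tau>a < \<tau>0"
      proof (rule ccontr)
        assume "\<not> \<tau>a < \<tau>0"
        then have "thr \<pi> xq xu \<tau>0 \<le> thr \<pi> xq xu \<tau>a" using thrs[of \<tau>0 \<tau>a] ta by (cases "\<tau>a = \<tau>0") auto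
        then have "Lt z0 \<le> Lt a" using ta t0 unfolding y0_def by simp
        then show False using strict_monoD[OF Lsm a] by simp
      qed
      from eventually_at_left_real[OF this]
      show "eventually (\<lambda>\<tau>. a < G \<tau>) (at_left \<tau>0)"
      proof eventually_elim
        case (elim \<tau>)
        then have "Lt a < Lt (G \<tau>)" using GL[of \<tau>] thrs[of \<tau>a \<tau>] t0 ta by auto
        then show ?case using strict_mono_less[OF Lsm] by simp
      qed
    qed
  qed
  have m1: "M.S1 z0 < M.S1 z" if "z0 < z" for z using M.S1_strict[OF that] .
  have m2: "M.S1 z0 < M.S2 z" if "z < z0" for z using M.S2_strict[OF that] z0 by simp
  obtain R where R1: "((\<lambda>z. regret xq xu c Q (M.S1 z)) \<longlongrightarrow> R) (at_right z0)"
    and R2: "((\<lambda>z. regret xq xu c Q (M.S2 z)) \<longlongrightarrow> R) (at_left z0)"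
    using regret_lim[OF xs M.S1_cont M.S2_cont refl z0[symmetric] m1 m2] by blast
  have L1: "((\<lambda>\<tau>. regret xq xu c Q (M.S1 (G \<tau>))) \<longlongrightarrow> R) (at_right \<tau>0)"
    using filterlim_compose[OF R1 FR] .
  have L2: "((\<lambda>\<tau>. regret xq xu c Q (M.S2 (G \<tau>))) \<longlongrightarrow> R) (at_left \<tau>0)"
    using filterlim_compose[OF R2 FL] .
  have "((\<lambda>\<tau>. regret xq xu c Q (s1 hq hu \<pi> xq xu \<theta> \<tau>)) \<longlongrightarrow> R) (at_right \<tau>0)"
  proof (rule Lim_transform_eventually[OF L1])
    show "eventually (\<lambda>\<tau>. regret xq xu c Q (M.S1 (G \<tau>)) = regret xq xu c Q (s1 hq hu \<pi> xq xu \<theta> \<tau>)) (at_right \<tau>0)"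
      using evR by eventually_elim (use t0 in \<open>auto simp: s1eq\<close>)
  qed
  moreover have "((\<lambda>\<tau>. regret xq xu c Q (s2 hq hu \<pi> xq xu \<theta> \<tau>)) \<longlongrightarrow> R) (at_left \<tau>0)"
  proof (rule Lim_transform_eventually[OF L2])
    show "eventually (\<lambda>\<tau>. regret xq xu c Q (M.S2 (G \<tau>)) = regret xq xu c Q (s2 hq hu \<pi> xq xu \<theta> \<tau>)) (at_left \<tau>0)"
      using evL by eventually_elim (use t0 in \<open>auto simp: s2eq\<close>)
  qed
  ultimately show ?thesis unfolding ts by blast
qed

end
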